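(* Let $N \ge 1$ and let $W_N$ be the set of binary words of length $N$. Define $\varphi_4 : W_N \to W_N$ by $\varphi_4(u) = v\, 01100\, v'$ if $u = v\, 01010\, v'$ where $v, v'$ are (possibly empty) words such that the word $v010$ does not contain $01010$ as a contiguous subword; and $\varphi_4(u) = u$ otherwise. Then $|P(\varphi_4(u))| \leq |P(u)|$ for every $u \in W_N$.
   Context: Juxtaposition denotes concatenation. For a binary word $w = w_1 \cdots w_\ell$ of length $\ell$, $P(w)$ is the set of indices $i \geq 2$ such that at least one of the following holds: (i) $\ell \geq i$ and $w_{i-1} w_i = 00$; (ii) $\ell \geq i+2$ and $w_{i-1} w_i w_{i+1} w_{i+2} = 0100$; (iii) $\ell \geq i+3$ and $w_{i-1} \cdots w_{i+3} = 01010$. *)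

theory Defs
  imports Main "HOL-Library.Sublist"
begin

(* Binary words are lists of naturals with entries in {0,1}.
   Letters are 1-indexed as in the paper: w_j = w ! (j - 1). *)

definition P :: "nat list \<Rightarrow> nat set" where
  "P w = {i. 2 \<le> i \<and>
     ((length w \<ge> i \<and> w ! (i-2) = 0 \<and> w ! (i-1) = 0)
    \<or> (length w \<ge> i + 2 \<and> w ! (i-2) = 0 \<and> w ! (i-1) = 1 \<and> w ! i = 0 \<and> w ! (i+1) = 0)
    \<or> (length w \<ge> i + 3 \<and> w ! (i-2) = 0 \<and> w ! (i-1) = 1 \<and> w ! i = 0
          \<and> w ! (i+1) = 1 \<and> w ! (i+2) = 0))}"

definition phi4_split :: "nat list \<Rightarrow> nat list \<Rightarrow> nat list \<Rightarrow> bool" where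
  "phi4_split u v v' \<longleftrightarrow> u = v @ [0,1,0,1,0] @ v' \<and> \<not> sublist [0,1,0,1,0] (v @ [0,1,0])"

definition phi4 :: "nat list \<Rightarrow> nat list" where
  "phi4 u = (if \<exists>v v'. phi4_split u v v'
             then (SOME w. \<exists>v v'. phi4_split u v v' \<and> w = v @ [0,1,1,0,0] @ v')
             else u)"

end

theory Submission
  imports Defs
begin

lemma P_fin: "finite (P w)"
proof -
  have "P w \<subseteq> {..length w}" unfolding P_def by auto
  thus ?thesis using finite_subset by blast
qed

lemma main:
  assumes sp: "phi4_split u v v'"
  shows "card (P (v @ [0,1,1,0,0] @ v')) \<le> card (P u)"
proof -
  define w where "w = v @ [0,1,1,0,0] @ v'"
  define k where "k = length v"
  have u: "u = v @ [0,1,0,1,0] @ v'" and ns: "\<not> sublist [0,1,0,1,0] (v @ [0,1,0])"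
    using sp unfolding phi4_split_def by auto
  have len: "length w = length u" "length u = k + 5 + length v'"
    unfolding w_def u k_def by auto
  have agree: "\<And>x. x \<noteq> k+2 \<Longrightarrow> x \<noteq> k+3 \<Longrightarrow> w!x = u!x"
  proof -
    fix x assume "x \<noteq> k+2" "x \<noteq> k+3"
    show "w!x = u!x"
    proof (cases "x < k")
      case True thus ?thesis unfolding w_def u k_def by (simp add: nth_append)
    next
      case False
      then obtain d where d: "x = k + d" by (metis le_add_diff_inverse not_less)
      show ?thesis using \<open>x \<noteq> k+2\<close> \<open>x \<noteq> k+3\<close> unfolding w_def u k_def d
        by (cases "d < 5") (auto simp: nth_append less_Suc_eq numeral_eq_Suc)
    qed
  qed
  have wv: "w!k = 0" "w!(k+1) = 1" "w!(k+2) = 1" "w!(k+3) = 0" "w!(k+4) = 0"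
    unfolding w_def k_def by (auto simp: nth_append)
  have uv: "u!k = 0" "u!(k+1) = 1" "u!(k+2) = 0" "u!(k+3) = 1" "u!(k+4) = 0"
    unfolding u k_def by (auto simp: nth_append)
  have first: "\<not> (k \<ge> 2 \<and> u!(k-2) = 0 \<and> u!(k-1) = 1)"
  proof
    assume h: "k \<ge> 2 \<and> u!(k-2) = 0 \<and> u!(k-1) = 1"
    then obtain v0 a b where vv: "v = v0 @ [a,b]"
      unfolding k_def
      by (metis Suc_le_length_iff append_butlast_last_id butlast_snoc length_0_conv
          length_butlast list.size(3) not_numeral_le_zero numeral_2_eq_2
          diff_Suc_1 Suc_le_mono le_zero_eq length_append_singleton append.assoc
          append_Cons append_Nil)
    have "u!(k-2) = a" "u!(k-1) = b" unfolding u k_def vv by (auto simp: nth_append)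
    with h have "v @ [0,1,0] = v0 @ [0,1,0,1,0]" using vv by simp
    hence "sublist [0,1,0,1,0] (v @ [0,1,0])" by simp
    with ns show False by simp
  qed
  have sub: "P w \<subseteq> insert (k+5) (P u - {k+2})"
  proof
    fix i assume iw: "i \<in> P w"
    show "i \<in> insert (k+5) (P u - {k+2})"
    proof (cases "i = k+5")
      case True thus ?thesis by simp
    next
      case ne: False
      have i2: "i \<ge> 2" using iw unfolding P_def by auto
      consider "i + 2 < k + 2" | "i = k" | "i = k+1" | "i = k+2" | "i = k+3" | "i = k+4"
        | "i \<ge> k + 6" using ne by linarith
      then show ?thesis
      proof cases
        case 1
        have "w!(i-2) = u!(i-2)" "w!(i-1) = u!(i-1)" "w!i = u!i" "w!(i+1) = u!(i+1)"
          "w!(i+2) = u!(i+2)" using 1 agree by auto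
        thus ?thesis using iw 1 len unfolding P_def by auto
      next
        case 7
        have "w!(i-2) = u!(i-2)" "w!(i-1) = u!(i-1)" "w!i = u!i" "w!(i+1) = u!(i+1)"
          "w!(i+2) = u!(i+2)" using 7 agree by auto
        thus ?thesis using iw 7 len unfolding P_def by auto
      next
        case 2
        have "w!(i-2) = u!(i-2)" "w!(i-1) = u!(i-1)" using 2 i2 agree by auto
        thus ?thesis using iw 2 len wv uv unfolding P_def by auto
      next
        case 3
        have "w!(i-2) = u!(i-2)" using 3 agree by auto
        thus ?thesis using iw 3 len wv uv unfolding P_def by auto
      next
        case 4
        thus ?thesis using iw len wv unfolding P_def by auto
      next
        case 5
        thus ?thesis using iw len wv unfolding P_def by auto
      next
        case 6
        thus ?thesis using iw len wv unfolding P_def by auto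
      qed
    qed
  qed
  have inP: "k+2 \<in> P u"
  proof -
    have e: "k+2-2 = k" "k+2-1 = k+1" "k+2+1 = k+3" "k+2+2 = k+4" by auto
    show ?thesis unfolding P_def mem_Collect_eq e using uv len by simp
  qed
  have "card (P w) \<le> card (insert (k+5) (P u - {k+2}))"
    by (rule card_mono[OF _ sub]) (simp add: P_fin)
  also have "\<dots> \<le> Suc (card (P u - {k+2}))" by (simp add: card_insert_le_m1 P_fin card_insert_if)
  also have "\<dots> = card (P u)" using inP P_fin
    by (metis card_Suc_Diff1)
  finally show ?thesis unfolding w_def .
qed

theorem lemma4p4:
  fixes N :: nat and u :: "nat list"
  assumes "N \<ge> 1" and "length u = N" and "set u \<subseteq> {0, 1}"
  shows "card (P (phi4 u)) \<le> card (P u)"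
proof (cases "\<exists>v v'. phi4_split u v v'")
  case True
  hence "\<exists>w. \<exists>v v'. phi4_split u v v' \<and> w = v @ [0,1,1,0,0] @ v'" by blast
  from someI_ex[OF this] obtain v v' where
    "phi4_split u v v'" "phi4 u = v @ [0,1,1,0,0] @ v'"
    using True unfolding phi4_def by auto
  thus ?thesis using main by simp
next
  case False
  have "phi4 u = u" unfolding phi4_def by (rule if_not_P[OF False])
  thus ?thesis by simp
qed

end
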